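(* Let $f_i:\mathbb{R}^p\to\mathbb{R}$, $1\le i\le n$, be $L_i$-smooth for some $L_i>0$, and suppose $f=\frac1n\sum_{i=1}^nf_i$ takes the form $f(x)=g(Hx)$ for an $\alpha$-strongly convex and $\mathbf{L}$-smooth function $g:\mathbb{R}^m\to\mathbb{R}$ and $H\in\mathbb{R}^{m\times p}$. Then $L:=\max_{1\le i\le n}L_i$ satisfies $L\ge\alpha\|H\|_2^2$.
   Context: $h$ is $L$-smooth if $\|\nabla h(x)-\nabla h(y)\|\le L\|x-y\|$ for all $x,y$; $\alpha$-strongly convex ($\alpha\ge 0$) if $h(y)\ge h(x)+\langle y-x,\nabla h(x)\rangle+\frac\alpha2\|y-x\|^2$ for all $x,y$. $\|H\|_2=\sup_{x\ne0}\|Hx\|/\|x\|$ with Euclidean norms. *)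

theory Defs
  imports "HOL-Analysis.Analysis"
begin

definition L_smooth :: "real \<Rightarrow> ('a::euclidean_space \<Rightarrow> real) \<Rightarrow> bool" where
  "L_smooth L h \<longleftrightarrow> (\<exists>G. (\<forall>x. (h has_derivative (\<lambda>v. G x \<bullet> v)) (at x)) \<and>
      (\<forall>x y. norm (G x - G y) \<le> L * norm (x - y)))"

definition strongly_convex :: "real \<Rightarrow> ('a::euclidean_space \<Rightarrow> real) \<Rightarrow> bool" where
  "strongly_convex \<alpha> h \<longleftrightarrow> \<alpha> \<ge> 0 \<and> (\<exists>G. (\<forall>x. (h has_derivative (\<lambda>v. G x \<bullet> v)) (at x)) \<and>
      (\<forall>x y. h y \<ge> h x + (y - x) \<bullet> G x + \<alpha> / 2 * (norm (y - x))\<^sup>2))"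

end

theory Submission
  imports Defs
begin

theorem lemma2p13:
  fixes n :: nat
    and f :: "nat \<Rightarrow> real^'p \<Rightarrow> real"
    and Ls :: "nat \<Rightarrow> real"
    and g :: "real^'m \<Rightarrow> real"
    and H :: "real^'p^'m"
    and \<alpha> Lg :: real
  assumes "n \<ge> 1"
    and "\<forall>i\<in>{1..n}. Ls i > 0 \<and> L_smooth (Ls i) (f i)"
    and "strongly_convex \<alpha> g"
    and "L_smooth Lg g"
    and "\<forall>x. (1 / real n) * (\<Sum>i=1..n. f i x) = g (H *v x)"
  shows "Max (Ls ` {1..n}) \<ge> \<alpha> * (onorm (\<lambda>x. H *v x))\<^sup>2"
proof -
  define L where "L = Max (Ls ` {1..n})"
  have LsL: "Ls i \<le> L" if "i \<in> {1..n}" for i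
    unfolding L_def using that by (intro Max_ge) auto
  have Lpos: "L > 0" using LsL[of 1] assms(1,2) by force
  have "\<forall>i\<in>{1..n}. \<exists>G. (\<forall>x. (f i has_derivative (\<lambda>v. G x \<bullet> v)) (at x)) \<and>
      (\<forall>x y. norm (G x - G y) \<le> Ls i * norm (x - y))"
    using assms(2) unfolding L_smooth_def by blast
  then obtain Gs where Gs: "\<And>i x. i \<in> {1..n} \<Longrightarrow> (f i has_derivative (\<lambda>v. Gs i x \<bullet> v)) (at x)"
    and GsL: "\<And>i x y. i \<in> {1..n} \<Longrightarrow> norm (Gs i x - Gs i y) \<le> Ls i * norm (x - y)"
    by metis
  obtain Gg where al: "\<alpha> \<ge> 0" and Gg: "\<And>x. (g has_derivative (\<lambda>v. Gg x \<bullet> v)) (at x)"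
    and sc: "\<And>x y. g y \<ge> g x + (y - x) \<bullet> Gg x + \<alpha> / 2 * (norm (y - x))\<^sup>2"
    using assms(3) unfolding strongly_convex_def by blast
  define Gf where "Gf x = (1 / real n) *\<^sub>R (\<Sum>i=1..n. Gs i x)" for x
  have feq: "(\<lambda>x. (1 / real n) * (\<Sum>i=1..n. f i x)) = (\<lambda>x. g (H *v x))"
    using assms(5) by auto
  have Dfeq: "Gf x \<bullet> v = Gg (H *v x) \<bullet> (H *v v)" for x v
  proof -
    have d1: "((\<lambda>x. (1 / real n) * (\<Sum>i=1..n. f i x)) has_derivative
        (\<lambda>v. (1 / real n) * (\<Sum>i=1..n. Gs i x \<bullet> v))) (at x)"
      by (intro has_derivative_mult_right has_derivative_sum Gs) auto
    have d2: "((\<lambda>x. g (H *v x)) has_derivative (\<lambda>v. Gg (H *v x) \<bullet> (H *v v))) (at x)"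
      using has_derivative_compose[OF bounded_linear.has_derivative[OF matrix_vector_mul_bounded_linear[of H] has_derivative_ident] Gg]
      by (simp add: o_def)
    have "(\<lambda>v. (1 / real n) * (\<Sum>i=1..n. Gs i x \<bullet> v)) = (\<lambda>v. Gg (H *v x) \<bullet> (H *v v))"
      using has_derivative_unique[OF d1[unfolded feq] d2] .
    then have "(1 / real n) * (\<Sum>i=1..n. Gs i x \<bullet> v) = Gg (H *v x) \<bullet> (H *v v)"
      by meson
    moreover have "Gf x \<bullet> v = (1 / real n) * (\<Sum>i=1..n. Gs i x \<bullet> v)"
      unfolding Gf_def by (simp add: inner_sum_left)
    ultimately show ?thesis by simp
  qed
  have key: "\<alpha> * (norm (H *v v))\<^sup>2 \<le> L * (norm v)\<^sup>2" for v
  proof -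
    note s1 = sc[of "H *v 0" "H *v v"]
    note s2 = sc[of "H *v v" "H *v 0"]
    have hv: "H *v v - H *v 0 = H *v v" by simp
    have "\<alpha> * (norm (H *v v))\<^sup>2 \<le> (Gg (H *v v) - Gg (H *v 0)) \<bullet> (H *v v)"
      using s1 s2 hv by (simp add: inner_diff_left inner_diff_right inner_commute norm_minus_commute)
    also have "\<dots> = (Gf v - Gf 0) \<bullet> v"
      using Dfeq[of v v] Dfeq[of 0 v] by (simp add: inner_diff_left)
    also have "\<dots> \<le> norm (Gf v - Gf 0) * norm v"
      by (rule norm_cauchy_schwarz)
    also have "norm (Gf v - Gf 0) \<le> L * norm v"
    proof -
      have "Gf v - Gf 0 = (1 / real n) *\<^sub>R (\<Sum>i=1..n. Gs i v - Gs i 0)"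
        unfolding Gf_def by (simp add: sum_subtractf scaleR_diff_right)
      then have "norm (Gf v - Gf 0) = (1 / real n) * norm (\<Sum>i=1..n. Gs i v - Gs i 0)"
        by simp
      also have "\<dots> \<le> (1 / real n) * (\<Sum>i=1..n. norm (Gs i v - Gs i 0))"
        by (intro mult_left_mono norm_sum) auto
      also have "\<dots> \<le> (1 / real n) * (\<Sum>i=1..n. L * norm v)"
        apply (intro mult_left_mono sum_mono)
        subgoal for i
          using GsL[of i v 0] LsL[of i] mult_right_mono[of "Ls i" L "norm v"] by force
        by simp
      also have "\<dots> = L * norm v" using assms(1) by simp
      finally show ?thesis .
    qed
    then have "norm (Gf v - Gf 0) * norm v \<le> L * norm v * norm v"
      by (rule mult_right_mono) simp
    finally show ?thesis by (simp add: power2_eq_square mult.assoc)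
  qed
  show ?thesis
  proof (cases "\<alpha> = 0")
    case True then show ?thesis using Lpos L_def by simp
  next
    case False
    then have ap: "\<alpha> > 0" using al by simp
    have b: "norm (H *v v) \<le> sqrt (L / \<alpha>) * norm v" for v
    proof -
      have "(norm (H *v v))\<^sup>2 \<le> (L / \<alpha>) * (norm v)\<^sup>2"
        using key[of v] ap by (simp add: field_simps)
      then have "sqrt ((norm (H *v v))\<^sup>2) \<le> sqrt ((L / \<alpha>) * (norm v)\<^sup>2)"
        using real_sqrt_le_mono by blast
      moreover have "sqrt ((L / \<alpha>) * (norm v)\<^sup>2) = sqrt (L / \<alpha>) * norm v"
        by (subst real_sqrt_mult) simp
      ultimately show ?thesis by simp
    qed
    have o1: "onorm (\<lambda>x. H *v x) \<le> sqrt (L / \<alpha>)" by (rule onorm_le) (rule b)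
    have o0: "0 \<le> onorm (\<lambda>x. H *v x)"
      using onorm_pos_le[OF matrix_vector_mul_bounded_linear[of H]] by simp
    have "(onorm (\<lambda>x. H *v x))\<^sup>2 \<le> (sqrt (L / \<alpha>))\<^sup>2"
      using o0 o1 by (simp add: power_mono)
    also have "\<dots> = L / \<alpha>" using ap Lpos by simp
    finally have "\<alpha> * (onorm (\<lambda>x. H *v x))\<^sup>2 \<le> \<alpha> * (L / \<alpha>)"
      using ap by (intro mult_left_mono) auto
    then show ?thesis using ap L_def by simp
  qed
qed

end
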